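(* The Veech homomorphism $V\colon \mathrm{Aff}(S_E)\to GL(2,\mathbb R)$, $\Psi\mapsto D\Psi$, is injective. Moreover, $\mathrm{Aff}(S_E)$ is generated by the three affine automorphisms $\Psi_\alpha,\Psi_\beta,\Psi_\gamma$ whose derivatives are $$\alpha=\begin{pmatrix}1&0\\0&-1\end{pmatrix},\qquad \beta=\begin{pmatrix}\tfrac12&\tfrac{\sqrt3}{2}\\ \tfrac{\sqrt3}{2}&-\tfrac12\end{pmatrix},\qquad \gamma=\begin{pmatrix}-1&2\sqrt3\\0&1\end{pmatrix}.$$ Consequently the Veech group $V(S_E)$ is generated by $\alpha,\beta,\gamma$.
   Context: Let $E$ be the regular hexagon of side length $1$, centred at the origin, with two horizontal sides. Gluing each pair of opposite parallel sides by the translation identifying them gives a translation surface $S_E$: a flat torus carrying two marked points, namely the two equivalence classes of vertices of $E$; let $\Sigma$ denote the set of these two marked points. An affine automorphism of $S_E$ is a homeomorphism $\Psi\colon S_E\to S_E$ such that: - $\Psi(\Sigma)=\Sigma$; - on $S_E\setminus\Sigma$, $\Psi$ is a diffeomorphism whose derivative, computed in the translation charts, is a constant matrix $D\Psi\in GL(2,\mathbb R)$. Orientation-reversing affine automorphisms are allowed. They form a group $\mathrm{Aff}(S_E)$. The Veech group $V(S_E)$ is the image of $\mathrm{Aff}(S_E)$ under $\Psi\mapsto D\Psi$; it is contained in the group of real $2\times 2$ matrices of determinant $\pm1$. *)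

theory Defs
  imports "HOL-Analysis.Analysis"
begin

text \<open>The regular hexagon E of side 1 centred at the origin with two horizontal sides has
vertices (1,0), (1/2, sqrt 3/2), (-1/2, sqrt 3/2), (-1,0), (-1/2,-sqrt 3/2), (1/2,-sqrt 3/2).
The side-gluing translations are (0, sqrt 3), (3/2, sqrt 3/2), (3/2, -sqrt 3/2); they generate
the lattice hex_lattice, and the glued surface S_E is the flat torus R^2 / hex_lattice.\<close>

definition hex_u :: "real^2" where "hex_u = vector [3/2, sqrt 3 / 2]"
definition hex_v :: "real^2" where "hex_v = vector [0, sqrt 3]"

definition hex_lattice :: "(real^2) set" where
  "hex_lattice = {of_int m *\<^sub>R hex_u + of_int n *\<^sub>R hex_v | m n. True}"

definition tor_rel :: "real^2 \<Rightarrow> real^2 \<Rightarrow> bool" where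
  "tor_rel x y \<longleftrightarrow> x - y \<in> hex_lattice"

lemma tor_rel_equivp: "equivp tor_rel"
proof (rule equivpI)
  show "reflp tor_rel"
    unfolding reflp_def tor_rel_def hex_lattice_def
    by (auto intro!: exI[of _ 0])
  show "symp tor_rel"
    unfolding symp_def tor_rel_def hex_lattice_def
  proof (intro allI impI)
    fix x y :: "real^2" assume "x - y \<in> {of_int m *\<^sub>R hex_u + of_int n *\<^sub>R hex_v | m n. True}"
    then obtain m n where "x - y = of_int m *\<^sub>R hex_u + of_int n *\<^sub>R hex_v" by auto
    then have "y - x = of_int (-m) *\<^sub>R hex_u + of_int (-n) *\<^sub>R hex_v"
      by (simp add: algebra_simps)
    then show "y - x \<in> {of_int m *\<^sub>R hex_u + of_int n *\<^sub>R hex_v | m n. True}" by blast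
  qed
  show "transp tor_rel"
    unfolding transp_def tor_rel_def hex_lattice_def
  proof (intro allI impI)
    fix x y z :: "real^2"
    assume "x - y \<in> {of_int m *\<^sub>R hex_u + of_int n *\<^sub>R hex_v | m n. True}"
       and "y - z \<in> {of_int m *\<^sub>R hex_u + of_int n *\<^sub>R hex_v | m n. True}"
    then obtain m n m' n' where a: "x - y = of_int m *\<^sub>R hex_u + of_int n *\<^sub>R hex_v"
      and b: "y - z = of_int m' *\<^sub>R hex_u + of_int n' *\<^sub>R hex_v" by auto
    have "x - z = (x - y) + (y - z)" by simp
    also have "\<dots> = of_int (m + m') *\<^sub>R hex_u + of_int (n + n') *\<^sub>R hex_v"
      unfolding a b by (simp add: algebra_simps)
    finally show "x - z \<in> {of_int m *\<^sub>R hex_u + of_int n *\<^sub>R hex_v | m n. True}" by blast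
  qed
qed

text \<open>The surface S_E as a type: points of R^2 modulo the lattice.\<close>
quotient_type hex_torus = "real^2" / tor_rel
  by (rule tor_rel_equivp)

text \<open>Quotient topology on S_E: U is open iff its preimage under the projection is open.\<close>
instantiation hex_torus :: topological_space
begin
definition open_hex_torus_def: "open (U :: hex_torus set) \<longleftrightarrow> open (abs_hex_torus -` U)"
instance
  by standard (auto simp: open_hex_torus_def vimage_Union intro: open_Union)
end

text \<open>The two marked points: the two classes of vertices of E.\<close>
definition hex_Sigma :: "hex_torus set" where
  "hex_Sigma = {abs_hex_torus (vector [1, 0]), abs_hex_torus (vector [-1, 0])}"

text \<open>Psi is an affine automorphism of S_E with derivative A: a homeomorphism preserving Sigma,
which in the translation charts (local inverses of the projection R^2 -> S_E) is, near every
point outside Sigma, an affine map x |-> A x + b with constant A in GL(2,R).\<close>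
definition is_affine_aut :: "(hex_torus \<Rightarrow> hex_torus) \<Rightarrow> real^2^2 \<Rightarrow> bool" where
  "is_affine_aut \<Psi> A \<longleftrightarrow>
     (\<exists>\<Psi>'. homeomorphism UNIV UNIV \<Psi> \<Psi>') \<and> \<Psi> ` hex_Sigma = hex_Sigma \<and> invertible A \<and>
     (\<forall>p. abs_hex_torus p \<notin> hex_Sigma \<longrightarrow>
        (\<exists>U b. open U \<and> p \<in> U \<and> (\<forall>x\<in>U. \<Psi> (abs_hex_torus x) = abs_hex_torus (A *v x + b))))"

definition Aff_SE :: "(hex_torus \<Rightarrow> hex_torus) set" where
  "Aff_SE = {\<Psi>. \<exists>A. is_affine_aut \<Psi> A}"

definition Veech_SE :: "(real^2^2) set" where
  "Veech_SE = {A. \<exists>\<Psi>. is_affine_aut \<Psi> A}"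

text \<open>Subgroup generated by a set G inside a group given by multiplication, unit and inverse.\<close>
inductive_set generated :: "('a \<Rightarrow> 'a \<Rightarrow> 'a) \<Rightarrow> 'a \<Rightarrow> ('a \<Rightarrow> 'a) \<Rightarrow> 'a set \<Rightarrow> 'a set"
  for mult one invf G where
  gen_one: "one \<in> generated mult one invf G"
| gen_base: "g \<in> G \<Longrightarrow> g \<in> generated mult one invf G"
| gen_mult: "f \<in> generated mult one invf G \<Longrightarrow> g \<in> generated mult one invf G \<Longrightarrow>
              mult f g \<in> generated mult one invf G"
| gen_inv: "f \<in> generated mult one invf G \<Longrightarrow> invf f \<in> generated mult one invf G"

definition mat_alpha :: "real^2^2" where
  "mat_alpha = vector [vector [1, 0], vector [0, -1]]"
definition mat_beta :: "real^2^2" where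
  "mat_beta = vector [vector [1/2, sqrt 3 / 2], vector [sqrt 3 / 2, -1/2]]"
definition mat_gamma :: "real^2^2" where
  "mat_gamma = vector [vector [-1, 2 * sqrt 3], vector [0, 1]]"

end

theory Submission
  imports Defs
begin

definition c1 :: "real^2 \<Rightarrow> real" where "c1 x = x$1 - x$2 / sqrt 3"
definition c2 :: "real^2 \<Rightarrow> real" where "c2 x = x$2 / sqrt 3 - x$1 / 3"
definition g1 :: "real^2" where "g1 = hex_u"
definition g2 :: "real^2" where "g2 = hex_u + hex_v"

definition phi :: "real \<Rightarrow> real \<Rightarrow> real \<Rightarrow> real \<Rightarrow> real^2^2" where
 "phi a b c d = vector [vector [3/2*(a+c) - (b+d)/2, sqrt 3/2*(b+d-a-c)],
     vector [sqrt 3/2*(a+3*c) - sqrt 3/6*(b+3*d), (b+3*d-a-3*c)/2]]"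

lemma s3: "sqrt 3 * sqrt 3 = (3::real)" by simp
lemma s3pos: "sqrt 3 > (0::real)" by simp
lemma s3b: "sqrt 3 * (sqrt 3 * y) = (3::real) * y" by (simp add: mult.assoc[symmetric])

lemma c1_add: "c1 (x + y) = c1 x + c1 y" and c1_scale: "c1 (r *\<^sub>R x) = r * c1 x"
  and c2_add: "c2 (x + y) = c2 x + c2 y" and c2_scale: "c2 (r *\<^sub>R x) = r * c2 x"
  and c1_minus: "c1 (x - y) = c1 x - c1 y" and c2_minus: "c2 (x - y) = c2 x - c2 y"
  and c1_uminus: "c1 (- x) = - c1 x" and c2_uminus: "c2 (- x) = - c2 x"
  by (auto simp: c1_def c2_def algebra_simps diff_divide_distrib add_divide_distrib)

lemma c_g: "c1 g1 = 1" "c2 g1 = 0" "c1 g2 = 0" "c2 g2 = 1"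
  by (auto simp: c1_def c2_def g1_def g2_def hex_u_def hex_v_def field_simps)

lemma c_uv: "c1 hex_u = 1" "c2 hex_u = 0" "c1 hex_v = -1" "c2 hex_v = 1"
  by (auto simp: c1_def c2_def hex_u_def hex_v_def field_simps)

lemma recon: "x = c1 x *\<^sub>R g1 + c2 x *\<^sub>R g2"
  using s3 by (auto simp: vec_eq_iff forall_2 c1_def c2_def g1_def g2_def hex_u_def hex_v_def field_simps)

lemma c_inj: "c1 x = c1 y \<Longrightarrow> c2 x = c2 y \<Longrightarrow> x = y"
  by (metis recon)

lemma lat_iff: "x \<in> hex_lattice \<longleftrightarrow> c1 x \<in> \<int> \<and> c2 x \<in> \<int>"
proof
  assume "x \<in> hex_lattice"
  then obtain m n where "x = of_int m *\<^sub>R hex_u + of_int n *\<^sub>R hex_v" by (auto simp: hex_lattice_def)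
  then show "c1 x \<in> \<int> \<and> c2 x \<in> \<int>" by (simp add: c1_add c2_add c1_scale c2_scale c_uv)
next
  assume "c1 x \<in> \<int> \<and> c2 x \<in> \<int>"
  then obtain m n where m: "c1 x = of_int m" and n: "c2 x = of_int n" by (auto elim!: Ints_cases)
  have "x = of_int (m+n) *\<^sub>R hex_u + of_int n *\<^sub>R hex_v"
    by (rule c_inj) (simp_all add: c1_add c2_add c1_scale c2_scale c_uv m n)
  then show "x \<in> hex_lattice" unfolding hex_lattice_def by blast
qed

lemma phi_c1: "c1 (phi a b c d *v x) = a * c1 x + b * c2 x"
  and phi_c2: "c2 (phi a b c d *v x) = c * c1 x + d * c2 x"
  using s3 s3pos by (auto simp: phi_def c1_def c2_def matrix_vector_mult_def sum_2 field_simps s3b)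

lemma phi_eq_iff: "phi a b c d = phi a' b' c' d' \<longleftrightarrow> a = a' \<and> b = b' \<and> c = c' \<and> d = d'"
proof
  assume h: "phi a b c d = phi a' b' c' d'"
  show "a = a' \<and> b = b' \<and> c = c' \<and> d = d'"
    using phi_c1[of a b c d g1] phi_c1[of a b c d g2] phi_c2[of a b c d g1] phi_c2[of a b c d g2]
      phi_c1[of a' b' c' d' g1] phi_c1[of a' b' c' d' g2] phi_c2[of a' b' c' d' g1] phi_c2[of a' b' c' d' g2]
    by (simp add: h c_g)
qed simp

lemma phi_mult: "phi a b c d ** phi a' b' c' d' = phi (a*a'+b*c') (a*b'+b*d') (c*a'+d*c') (c*b'+d*d')"
  unfolding matrix_eq
proof
  fix x
  show "(phi a b c d ** phi a' b' c' d') *v x = phi (a*a'+b*c') (a*b'+b*d') (c*a'+d*c') (c*b'+d*d') *v x"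
    by (rule c_inj) (simp_all add: matrix_vector_mul_assoc[symmetric] phi_c1 phi_c2 algebra_simps)
qed

lemma phi_one: "phi 1 0 0 1 = mat 1"
  unfolding matrix_eq by (auto intro!: c_inj simp: phi_c1 phi_c2)

lemma phi_all: "A = phi (c1 (A *v g1)) (c1 (A *v g2)) (c2 (A *v g1)) (c2 (A *v g2))"
  unfolding matrix_eq
proof
  fix x
  have e: "A *v x = c1 x *\<^sub>R (A *v g1) + c2 x *\<^sub>R (A *v g2)"
    by (subst recon[of x]) (simp add: matrix_vector_right_distrib matrix_vector_mult_scaleR)
  show "A *v x = phi (c1 (A *v g1)) (c1 (A *v g2)) (c2 (A *v g1)) (c2 (A *v g2)) *v x"
    by (rule c_inj) (simp_all add: e phi_c1 phi_c2 c1_add c2_add c1_scale c2_scale algebra_simps)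
qed

lemma alpha_phi: "mat_alpha = phi 2 3 (-1) (-2)"
  and beta_phi: "mat_beta = phi 1 3 0 (-1)"
  and gamma_phi: "mat_gamma = phi 1 6 0 (-1)"
  by (auto simp: mat_alpha_def mat_beta_def mat_gamma_def phi_def vec_eq_iff forall_2 field_simps)

abbreviation Gen where "Gen \<equiv> generated (**) (mat 1) matrix_inv {mat_alpha, mat_beta, mat_gamma}"

lemma minv_eq: "A ** B = mat 1 \<Longrightarrow> B ** A = mat 1 \<Longrightarrow> matrix_inv A = (B::real^2^2)"
proof -
  assume h: "A ** B = mat 1" "B ** A = mat 1"
  have "\<exists>A'. A ** A' = mat 1 \<and> A' ** A = mat 1" using h by blast
  then have i: "A ** matrix_inv A = mat 1 \<and> matrix_inv A ** A = mat 1"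
    unfolding matrix_inv_def by (rule someI_ex)
  have "matrix_inv A = matrix_inv A ** (A ** B)" using h by simp
  also have "\<dots> = (matrix_inv A ** A) ** B" by (simp add: matrix_mul_assoc)
  also have "\<dots> = B" using i by simp
  finally show ?thesis .
qed

lemma phi_inv_prod:
  assumes "a*d - b*c = e" "e*e = 1"
  shows "phi a b c d ** phi (e*d) (-e*b) (-e*c) (e*a) = mat 1"
    and "phi (e*d) (-e*b) (-e*c) (e*a) ** phi a b c d = mat 1"
proof -
  have "a*(e*d) + b*(-e*c) = e*(a*d - b*c)" "c*(-e*b) + d*(e*a) = e*(a*d-b*c)" by (simp_all add: algebra_simps)
  then have x: "a*(e*d) + b*(-e*c) = 1" "c*(-e*b) + d*(e*a) = 1" using assms by simp_all
  show "phi a b c d ** phi (e*d) (-e*b) (-e*c) (e*a) = mat 1"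
    using x by (simp add: phi_mult phi_one[symmetric] algebra_simps)
  have y: "e*d*a + -e*b*c = 1" "-e*c*b + e*a*d = 1" using x by (simp_all add: algebra_simps)
  show "phi (e*d) (-e*b) (-e*c) (e*a) ** phi a b c d = mat 1"
    using y by (simp add: phi_mult phi_one[symmetric] algebra_simps)
qed

lemma phi_inv:
  assumes "a*d - b*c = e" "e*e = 1"
  shows "matrix_inv (phi a b c d) = phi (e*d) (-e*b) (-e*c) (e*a)"
  by (rule minv_eq[OF phi_inv_prod[OF assms]])

definition hp :: "int \<Rightarrow> int \<Rightarrow> int \<Rightarrow> int \<Rightarrow> bool" where
  "hp a b c d \<longleftrightarrow> phi (of_int a) (of_int b) (of_int c) (of_int d) \<in> Gen"

lemma hp_mult: "hp a b c d \<Longrightarrow> hp a' b' c' d' \<Longrightarrow> hp (a*a'+b*c') (a*b'+b*d') (c*a'+d*c') (c*b'+d*d')"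
  unfolding hp_def by (drule gen_mult, assumption) (simp add: phi_mult)

lemma hp_inv: "hp a b c d \<Longrightarrow> a*d - b*c = e \<Longrightarrow> e*e = 1 \<Longrightarrow> hp (e*d) (-e*b) (-e*c) (e*a)"
  unfolding hp_def
proof -
  assume h: "phi (of_int a) (of_int b) (of_int c) (of_int d) \<in> Gen" "a*d - b*c = e" "e*e = 1"
  have "matrix_inv (phi (of_int a) (of_int b) (of_int c) (of_int d)) = phi (of_int e * of_int d) (- of_int e * of_int b) (- of_int e * of_int c) (of_int e * of_int a)"
  proof (rule phi_inv)
    show "real_of_int a * real_of_int d - real_of_int b * real_of_int c = real_of_int e"
      using h(2) by (metis of_int_mult of_int_diff)
    show "real_of_int e * real_of_int e = 1" using h(3) by (metis of_int_1 of_int_mult)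
  qed
  then show "phi (of_int (e*d)) (of_int (-e*b)) (of_int (-e*c)) (of_int (e*a)) \<in> Gen"
    using gen_inv[OF h(1)] by simp
qed


lemma hp_one: "hp 1 0 0 1" unfolding hp_def using phi_one gen_one by simp
lemma hp_alpha: "hp 2 3 (-1) (-2)"
proof -
  have "mat_alpha \<in> Gen" by (rule gen_base) simp
  then show ?thesis unfolding hp_def alpha_phi by simp
qed
lemma hp_beta: "hp 1 3 0 (-1)"
proof -
  have "mat_beta \<in> Gen" by (rule gen_base) simp
  then show ?thesis unfolding hp_def beta_phi by simp
qed
lemma hp_gamma: "hp 1 6 0 (-1)"
proof -
  have "mat_gamma \<in> Gen" by (rule gen_base) simp
  then show ?thesis unfolding hp_def gamma_phi by simp
qed

lemma hp_U1: "hp 1 3 0 1" using hp_mult[OF hp_beta hp_gamma] by simp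
lemma hp_R: "hp 2 3 (-1) (-1)" using hp_mult[OF hp_alpha hp_beta] by simp
lemma hp_R2: "hp 1 3 (-1) (-2)" using hp_mult[OF hp_R hp_R] by simp
lemma hp_mI: "hp (-1) 0 0 (-1)" using hp_mult[OF hp_R2 hp_R] by simp
lemma hp_Ui: "hp 1 (-3) 0 1" using hp_inv[OF hp_U1, of 1] by simp
lemma hp_Li: "hp 1 0 (-1) 1" using hp_mult[OF hp_R2 hp_Ui] by simp
lemma hp_L1: "hp 1 0 1 1" using hp_inv[OF hp_Li, of 1] by simp
lemma hp_D: "hp 1 0 0 (-1)" using hp_mult[OF hp_beta hp_Ui] by simp
lemma hp_D2: "hp (-1) 0 0 1" using hp_mult[OF hp_mI hp_D] by simp

lemma hp_Unat: "hp 1 (3 * int n) 0 1"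
proof (induction n)
  case 0 then show ?case using hp_one by simp
next
  case (Suc n) then show ?case using hp_mult[OF Suc hp_U1] by (simp add: algebra_simps)
qed

lemma hp_U: "hp 1 (3 * k) 0 1"
proof (cases "k \<ge> 0")
  case True then show ?thesis using hp_Unat[of "nat k"] by simp
next
  case False
  then have "hp 1 (3 * int (nat (-k))) 0 1" by (rule_tac hp_Unat)
  from hp_inv[OF this, of 1] False show ?thesis by simp
qed

lemma hp_Lnat: "hp 1 0 (int n) 1"
proof (induction n)
  case 0 then show ?case using hp_one by simp
next
  case (Suc n) then show ?case using hp_mult[OF Suc hp_L1] by (simp add: algebra_simps)
qed

lemma hp_L: "hp 1 0 k 1"
proof (cases "k \<ge> 0")
  case True then show ?thesis using hp_Lnat[of "nat k"] by simp
next
  case False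
  then have "hp 1 0 (int (nat (-k))) 1" by (rule_tac hp_Lnat)
  from hp_inv[OF this, of 1] False show ?thesis by simp
qed

lemma symrem: "(m::int) > 0 \<Longrightarrow> \<exists>r. m dvd (x - r) \<and> 2 * \<bar>r\<bar> \<le> m"
proof -
  assume m: "m > 0"
  have d: "m dvd (x - x mod m)" by (simp add: minus_mod_eq_mult_div)
  have r: "0 \<le> x mod m" "x mod m < m" using m by simp_all
  show ?thesis
  proof (cases "2 * (x mod m) \<le> m")
    case True then show ?thesis using d r by (intro exI[of _ "x mod m"]) simp
  next
    case False
    have "m dvd (x - (x mod m - m))" using d by (metis diff_diff_eq2 dvd_add_left_iff dvd_refl add.commute diff_add_eq)
    then show ?thesis using False r by (intro exI[of _ "x mod m - m"]) simp
  qed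
qed

lemma unit_int: "(a::int) * d = 1 \<or> a * d = -1 \<Longrightarrow> (a = 1 \<or> a = -1) \<and> (d = 1 \<or> d = -1)"
  using zmult_eq_1_iff[of a d] zmult_eq_1_iff[of "-a" d] by auto

lemma red: "a*d - b*c = 1 \<or> a*d - b*c = -1 \<Longrightarrow> 3 dvd b \<Longrightarrow> hp a b c d"
proof (induction "nat \<bar>c\<bar>" arbitrary: a b c d rule: less_induct)
  case less
  show ?case
  proof (cases "c = 0")
    case True
    with less.prems have u: "(a = 1 \<or> a = -1) \<and> (d = 1 \<or> d = -1)" by (intro unit_int) simp
    obtain k where k: "b = 3 * k" using less.prems(2) by blast
    have dg: "hp a 0 0 d" using u hp_one hp_mI hp_D hp_D2 by auto
    have "hp (1*a + 3*(k*d)*0) (1*0 + 3*(k*d)*d) (0*a+1*0) (0*0+1*d)"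
      by (rule hp_mult[OF hp_U dg])
    moreover have "d * d = 1" using u by auto
    ultimately show ?thesis using True k by (simp add: mult.assoc)
  next
    case False
    then have cp: "3 * \<bar>c\<bar> > 0" by simp
    obtain a' where a': "3 * \<bar>c\<bar> dvd (a - a')" "2 * \<bar>a'\<bar> \<le> 3 * \<bar>c\<bar>" using symrem[OF cp] by blast
    obtain k where k: "a' = a + 3*c*k"
    proof -
      from a'(1) have "3 * c dvd (a - a')" by (metis abs_dvd_iff abs_mult abs_of_nonneg zero_le_numeral)
      then obtain q where "a - a' = 3*c*q" by blast
      then show ?thesis by (intro that[of "-q"]) (simp add: algebra_simps)
    qed
    define b1 where "b1 = b + 3*k*d"
    have det1: "a'*d - b1*c = a*d - b*c" by (simp add: k b1_def algebra_simps)
    have b1: "3 dvd b1" using less.prems(2) by (simp add: b1_def)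
    have a'nz: "a' \<noteq> 0"
    proof
      assume "a' = 0"
      then have "b1 * c = -1 \<or> b1 * c = 1" using det1 less.prems(1) by auto
      moreover have "3 dvd b1 * c" using b1 by simp
      ultimately show False by auto
    qed
    then have ap: "\<bar>a'\<bar> > 0" by simp
    obtain c' where c': "\<bar>a'\<bar> dvd (c - c')" "2 * \<bar>c'\<bar> \<le> \<bar>a'\<bar>" using symrem[OF ap] by blast
    obtain j where j: "c' = c + j * a'"
    proof -
      from c'(1) have "a' dvd (c - c')" by simp
      then obtain q where "c - c' = a'*q" by blast
      then show ?thesis by (intro that[of "-q"]) (simp add: algebra_simps)
    qed
    define d1 where "d1 = d + j * b1"
    have det2: "a'*d1 - b1*c' = a*d - b*c" using det1 by (simp add: j d1_def algebra_simps)
    have lt: "nat \<bar>c'\<bar> < nat \<bar>c\<bar>" using c'(2) a'(2) False by simp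
    have h2: "hp a' b1 c' d1" using less.hyps[OF lt] det2 less.prems b1 by simp
    have h3: "hp (1*a'+0*c') (1*b1+0*d1) ((-j)*a'+1*c') ((-j)*b1+1*d1)"
      by (rule hp_mult[OF hp_L h2])
    have h4: "hp (1*a'+(3*(-k))*c) (1*b1+(3*(-k))*d) (0*a'+1*c) (0*b1+1*d)"
      by (rule hp_mult[OF hp_U]) (use h3 in \<open>simp add: j d1_def\<close>)
    show ?thesis using h4 by (simp add: k b1_def algebra_simps)
  qed
qed

section \<open>Torus\<close>

abbreviation ab :: "real^2 \<Rightarrow> hex_torus" where "ab \<equiv> abs_hex_torus"
abbreviation rp :: "hex_torus \<Rightarrow> real^2" where "rp \<equiv> rep_hex_torus"
abbreviation Lat where "Lat \<equiv> hex_lattice"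

lemma ab_eq: "ab x = ab y \<longleftrightarrow> x - y \<in> Lat"
  by (simp add: hex_torus.abs_eq_iff tor_rel_def)

lemma ab_rp: "ab (rp p) = p"
  by (rule Quotient3_abs_rep[OF Quotient3_hex_torus])

lemma lat_add: "x \<in> Lat \<Longrightarrow> y \<in> Lat \<Longrightarrow> x + y \<in> Lat"
  and lat_diff: "x \<in> Lat \<Longrightarrow> y \<in> Lat \<Longrightarrow> x - y \<in> Lat"
  and lat_uminus: "x \<in> Lat \<Longrightarrow> - x \<in> Lat"
  and lat_scale: "x \<in> Lat \<Longrightarrow> of_int k *\<^sub>R x \<in> Lat"
  by (auto simp: lat_iff c1_add c2_add c1_minus c2_minus c1_uminus c2_uminus c1_scale c2_scale
     c_g intro: Ints_add Ints_diff Ints_minus Ints_mult)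

lemma lat_zero: "0 \<in> Lat" by (simp add: lat_iff c1_def c2_def)

lemma lat_uminus_iff: "- x \<in> Lat \<longleftrightarrow> x \<in> Lat"
  using lat_uminus by fastforce

lemma lat_closed: "closed Lat"
proof -
  have c: "continuous_on UNIV c1" "continuous_on UNIV c2"
    unfolding c1_def[abs_def] c2_def[abs_def] by (intro continuous_intros; simp)+
  have "Lat = c1 -` \<int> \<inter> c2 -` \<int>" by (auto simp: lat_iff)
  then show ?thesis using closed_vimage[OF closed_Ints c(1)] closed_vimage[OF closed_Ints c(2)] by (metis closed_Int)
qed

lemma lat_countable: "countable Lat"
proof -
  have eq: "Lat = (\<lambda>(m,n). of_int m *\<^sub>R hex_u + of_int n *\<^sub>R hex_v) ` (UNIV :: (int \<times> int) set)"
    unfolding hex_lattice_def by auto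
  show ?thesis unfolding eq by (rule countable_image) simp
qed

definition latpres :: "real^2^2 \<Rightarrow> bool" where
  "latpres A \<longleftrightarrow> (\<forall>x\<in>Lat. A *v x \<in> Lat)"

definition T :: "real^2^2 \<Rightarrow> hex_torus \<Rightarrow> hex_torus" where
  "T A p = ab (A *v rp p)"

lemma T_ab: "latpres A \<Longrightarrow> T A (ab x) = ab (A *v x)"
proof -
  assume l: "latpres A"
  have "rp (ab x) - x \<in> Lat" using ab_rp[of "ab x"] by (simp add: ab_eq)
  then have "A *v (rp (ab x) - x) \<in> Lat" using l latpres_def by blast
  then show ?thesis unfolding T_def ab_eq by (simp add: matrix_vector_mult_diff_distrib)
qed

lemma T_comp: "latpres A \<Longrightarrow> latpres B \<Longrightarrow> T A \<circ> T B = T (A ** B)"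
proof
  fix p assume "latpres A" "latpres B"
  moreover have "latpres (A ** B)" using calculation by (simp add: latpres_def matrix_vector_mul_assoc[symmetric])
  ultimately have l: "latpres A" "latpres B" "latpres (A ** B)" by auto
  have "(T A \<circ> T B) p = T A (ab (B *v rp p))" by (simp add: T_def)
  also have "\<dots> = ab (A *v (B *v rp p))" by (rule T_ab[OF l(1)])
  also have "\<dots> = T (A ** B) p" by (simp add: T_def matrix_vector_mul_assoc)
  finally show "(T A \<circ> T B) p = T (A ** B) p" .
qed

lemma T_one: "T (mat 1) = id"
  by (rule ext) (simp add: T_def ab_rp)

lemma T_cont: "latpres A \<Longrightarrow> continuous_on UNIV (T A)"
proof (subst continuous_on_open_vimage[OF open_UNIV], intro allI impI)
  fix B :: "hex_torus set" assume l: "latpres A" and B: "open B"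
  have "ab -` (T A -` B) = (\<lambda>x. A *v x) -` (ab -` B)" using T_ab[OF l] by auto
  moreover have "open ((\<lambda>x. A *v x) -` (ab -` B))"
    using B open_hex_torus_def open_vimage matrix_vector_mult_linear_continuous_on by blast
  ultimately show "open (T A -` B \<inter> UNIV)" by (simp add: open_hex_torus_def)
qed

definition goodI :: "int \<Rightarrow> int \<Rightarrow> int \<Rightarrow> int \<Rightarrow> bool" where
  "goodI a b c d \<longleftrightarrow> (a*d - b*c = 1 \<or> a*d - b*c = -1) \<and> 3 dvd b"

definition goodR :: "real^2^2 \<Rightarrow> bool" where
  "goodR A \<longleftrightarrow> (\<exists>a b c d. A = phi (of_int a) (of_int b) (of_int c) (of_int d) \<and> goodI a b c d)"

lemma phi_int_latpres: "latpres (phi (of_int a) (of_int b) (of_int c) (of_int d))"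
  by (auto simp: latpres_def lat_iff phi_c1 phi_c2 elim!: Ints_cases)

lemma goodR_latpres: "goodR A \<Longrightarrow> latpres A"
  using phi_int_latpres goodR_def by auto

lemma goodR_one: "goodR (mat 1)"
  unfolding goodR_def goodI_def by (rule exI[of _ 1], rule exI[of _ 0], rule exI[of _ 0], rule exI[of _ 1]) (simp add: phi_one)

lemma goodR_mult: "goodR A \<Longrightarrow> goodR B \<Longrightarrow> goodR (A ** B)"
proof -
  assume "goodR A" "goodR B"
  then obtain a b c d a' b' c' d' where A: "A = phi (of_int a) (of_int b) (of_int c) (of_int d)" "goodI a b c d"
    and B: "B = phi (of_int a') (of_int b') (of_int c') (of_int d')" "goodI a' b' c' d'"
    unfolding goodR_def by blast
  have det: "(a*a'+b*c')*(c*b'+d*d') - (a*b'+b*d')*(c*a'+d*c') = (a*d-b*c)*(a'*d'-b'*c')"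
    by (simp add: algebra_simps)
  have "goodI (a*a'+b*c') (a*b'+b*d') (c*a'+d*c') (c*b'+d*d')"
    using A(2) B(2) unfolding goodI_def det by auto
  then show ?thesis unfolding goodR_def A(1) B(1) phi_mult
    by (intro exI[of _ "a*a'+b*c'"] exI[of _ "a*b'+b*d'"] exI[of _ "c*a'+d*c'"] exI[of _ "c*b'+d*d'"]) simp
qed

lemma goodR_inv: "goodR A \<Longrightarrow> goodR (matrix_inv A) \<and> A ** matrix_inv A = mat 1 \<and> matrix_inv A ** A = mat 1"
proof -
  assume "goodR A"
  then obtain a b c d where A: "A = phi (of_int a) (of_int b) (of_int c) (of_int d)" "goodI a b c d"
    unfolding goodR_def by blast
  define e where "e = a*d - b*c"
  have e: "e*e = 1" using A(2) unfolding goodI_def e_def by auto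
  have e1: "e = 1 \<or> e = -1" using A(2) unfolding goodI_def e_def by auto
  have re1: "real_of_int a * real_of_int d - real_of_int b * real_of_int c = real_of_int e" unfolding e_def by simp
  have re2: "real_of_int e * real_of_int e = 1" using e1 by auto
  note re = re1 re2
  have mi: "matrix_inv A = phi (of_int (e*d)) (of_int (-e*b)) (of_int (-e*c)) (of_int (e*a))"
    unfolding A(1) using phi_inv[OF re] by simp
  have "(e*d)*(e*a) - (-e*b)*(-e*c) = e*e*e" unfolding e_def by (simp add: algebra_simps)
  then have "(e*d)*(e*a) - (-e*b)*(-e*c) = e" using e by simp
  moreover have "3 dvd (-e*b)" using A(2) unfolding goodI_def by simp
  ultimately have "goodI (e*d) (-e*b) (-e*c) (e*a)" using e1 unfolding goodI_def by auto
  then have g: "goodR (matrix_inv A)" unfolding mi goodR_def by blast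
  have "A ** matrix_inv A = mat 1" "matrix_inv A ** A = mat 1"
    unfolding mi unfolding A(1) using phi_inv_prod[OF re] by simp_all
  with g show ?thesis by simp
qed

definition p1 :: "real^2" where "p1 = vector [1, 0]"

lemma Sigma_eq: "hex_Sigma = {ab p1, ab (- p1)}"
proof -
  have "(vector [-1, 0] :: real^2) = - p1" by (simp add: p1_def vec_eq_iff forall_2)
  then show ?thesis by (simp add: hex_Sigma_def p1_def)
qed

lemma cp1: "c1 p1 = 1" "c2 p1 = -1/3" by (simp_all add: p1_def c1_def c2_def)

lemma int_third: "(of_int m / 3 :: real) \<in> \<int> \<longleftrightarrow> 3 dvd m"
proof
  assume "(of_int m / 3 :: real) \<in> \<int>"
  then obtain k where "(of_int m / 3 :: real) = of_int k" by (rule Ints_cases)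
  then have "(of_int m :: real) = 3 * of_int k" by (simp add: field_simps)
  then have "(of_int m :: real) = of_int (3 * k)" by simp
  then have "m = 3 * k" by (simp only: of_int_eq_iff)
  then show "3 dvd m" by simp
next
  assume "3 dvd m" then obtain k where "m = 3 * k" by blast
  then have "(of_int m / 3 :: real) = of_int k" by simp
  then show "(of_int m / 3 :: real) \<in> \<int>" by (metis Ints_of_int)
qed

lemma p1_2: "2 *\<^sub>R p1 \<notin> Lat"
proof
  assume "2 *\<^sub>R p1 \<in> Lat"
  then have "c2 (2 *\<^sub>R p1) \<in> \<int>" by (simp add: lat_iff)
  then have "(of_int (-2) / 3 :: real) \<in> \<int>" by (simp add: c2_scale cp1)
  then show False unfolding int_third by simp
qed

lemma p1_3: "3 *\<^sub>R p1 \<in> Lat"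
  by (simp add: lat_iff c1_scale c2_scale cp1)

lemma Sigma_ne: "ab p1 \<noteq> ab (- p1)"
  using p1_2 by (simp add: ab_eq scaleR_2)

lemma mv_uminus: "A *v (- x) = - (A *v (x::real^2))"
  by (simp add: matrix_vector_mult_def vec_eq_iff sum_negf)

lemma good_p1: "goodR A \<Longrightarrow> A *v p1 - p1 \<in> Lat \<or> A *v p1 + p1 \<in> Lat"
proof -
  assume "goodR A"
  then obtain a b c d where A: "A = phi (of_int a) (of_int b) (of_int c) (of_int d)" and g: "goodI a b c d"
    unfolding goodR_def by blast
  obtain k where k: "b = 3 * k" using g unfolding goodI_def by blast
  have dd: "3 dvd (d - 1) \<or> 3 dvd (d + 1)"
  proof -
    have "a*d - 3*k*c = 1 \<or> a*d - 3*k*c = -1" using g k unfolding goodI_def by simp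
    moreover have "\<forall>t::int. 3*t \<noteq> 1 \<and> 3*t \<noteq> -1" by presburger
    ultimately have "\<not> 3 dvd d"
    proof -
      assume h: "a*d - 3*k*c = 1 \<or> a*d - 3*k*c = -1" "\<forall>t::int. 3*t \<noteq> 1 \<and> 3*t \<noteq> -1"
      show "\<not> 3 dvd d"
      proof
        assume "3 dvd d"
        then obtain m where d: "d = 3*m" by (elim dvdE)
        have "a*d - 3*k*c = 3*(a*m - k*c)" by (simp add: d algebra_simps)
        then show False using h by metis
      qed
    qed
    then show ?thesis by presburger
  qed
  then show ?thesis
  proof
    assume "3 dvd (d - 1)"
    then obtain l where "d - 1 = 3*l" by (elim dvdE)
    then have l: "d = 3*l + 1" by simp
    have "c1 (A *v p1 - p1) = of_int (a - k - 1)" by (simp add: A phi_c1 c1_minus cp1 k)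
    moreover have "c2 (A *v p1 - p1) = of_int (c - l)" by (simp add: A phi_c2 c2_minus cp1 l algebra_simps)
    ultimately show ?thesis by (simp add: lat_iff)
  next
    assume "3 dvd (d + 1)"
    then obtain l where "d + 1 = 3*l" by (elim dvdE)
    then have l: "d = 3*l - 1" by simp
    have "c1 (A *v p1 + p1) = of_int (a - k + 1)" by (simp add: A phi_c1 c1_add cp1 k)
    moreover have "c2 (A *v p1 + p1) = of_int (c - l)" by (simp add: A phi_c2 c2_add cp1 l algebra_simps)
    ultimately show ?thesis by (simp add: lat_iff)
  qed
qed

lemma good_Sigma: "goodR A \<Longrightarrow> T A ` hex_Sigma = hex_Sigma"
proof -
  assume g: "goodR A"
  have l: "latpres A" using g goodR_latpres by blast
  have im: "T A ` hex_Sigma = {ab (A *v p1), ab (- (A *v p1))}"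
    by (simp add: Sigma_eq T_ab[OF l] mv_uminus)
  from good_p1[OF g] show ?thesis
  proof
    assume h: "A *v p1 - p1 \<in> Lat"
    then have "- (A *v p1) - - p1 \<in> Lat" using lat_uminus by fastforce
    then have "ab (- (A *v p1)) = ab (- p1)" "ab (A *v p1) = ab p1" using h ab_eq by blast+
    then show ?thesis unfolding im unfolding Sigma_eq by simp
  next
    assume h: "A *v p1 + p1 \<in> Lat"
    then have "A *v p1 - - p1 \<in> Lat" by simp
    moreover have "- (A *v p1) - p1 = - (A *v p1 + p1)" by simp
    then have "- (A *v p1) - p1 \<in> Lat" using lat_uminus[OF h] by simp
    ultimately have "ab (A *v p1) = ab (- p1)" "ab (- (A *v p1)) = ab p1" using ab_eq by blast+
    then show ?thesis unfolding im unfolding Sigma_eq by (simp add: insert_commute)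
  qed
qed

lemma good_aff: "goodR A \<Longrightarrow> is_affine_aut (T A) A"
proof -
  assume g: "goodR A"
  obtain gi: "goodR (matrix_inv A)" and m1: "A ** matrix_inv A = mat 1" and m2: "matrix_inv A ** A = mat 1"
    using goodR_inv[OF g] by blast
  have l: "latpres A" "latpres (matrix_inv A)" using g gi goodR_latpres by blast+
  have c1': "T (matrix_inv A) \<circ> T A = id" "T A \<circ> T (matrix_inv A) = id"
    using T_comp[OF l(2) l(1)] T_comp[OF l(1) l(2)] m1 m2 T_one by simp_all
  have c1'': "\<And>x. T (matrix_inv A) (T A x) = x" "\<And>x. T A (T (matrix_inv A) x) = x"
    using c1' by (metis comp_apply id_apply)+
  have im1: "range (T A) = UNIV"
  proof (rule surjI)
    fix x show "T A (T (matrix_inv A) x) = x" by (rule c1''(2))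
  qed
  have im2: "range (T (matrix_inv A)) = UNIV"
  proof (rule surjI)
    fix x show "T (matrix_inv A) (T A x) = x" by (rule c1''(1))
  qed
  have hom: "homeomorphism UNIV UNIV (T A) (T (matrix_inv A))"
    unfolding homeomorphism_def using c1'' T_cont[OF l(1)] T_cont[OF l(2)] im1 im2 by blast
  have inv: "invertible A" unfolding invertible_def using m1 m2 by blast
  have loc: "\<forall>p. ab p \<notin> hex_Sigma \<longrightarrow> (\<exists>U b. open U \<and> p \<in> U \<and> (\<forall>x\<in>U. T A (ab x) = ab (A *v x + b)))"
  proof (intro allI impI)
    fix p show "\<exists>U b. open U \<and> p \<in> U \<and> (\<forall>x\<in>U. T A (ab x) = ab (A *v x + b))"
      by (rule exI[of _ UNIV], rule exI[of _ 0]) (simp add: T_ab[OF l(1)])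
  qed
  show ?thesis unfolding is_affine_aut_def
    by (intro conjI) (fact exI[of "\<lambda>\<Psi>'. homeomorphism UNIV UNIV (T A) \<Psi>'", OF hom], fact good_Sigma[OF g], fact inv, fact loc)
qed

lemma lat_scale3: "x \<in> Lat \<Longrightarrow> (3::real) *\<^sub>R x \<in> Lat"
  using lat_scale[of x 3] by simp

lemma P_char: "ab x \<in> hex_Sigma \<longleftrightarrow> x - p1 \<in> Lat \<or> x - - p1 \<in> Lat"
  by (auto simp: Sigma_eq ab_eq)

lemma P_countable: "countable (ab -` hex_Sigma)"
proof (rule countable_subset)
  show "ab -` hex_Sigma \<subseteq> (\<lambda>l. l + p1) ` Lat \<union> (\<lambda>l. l + - p1) ` Lat"
  proof
    fix x assume "x \<in> ab -` hex_Sigma"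
    then have "x - p1 \<in> Lat \<or> x - - p1 \<in> Lat" using P_char by blast
    then show "x \<in> (\<lambda>l. l + p1) ` Lat \<union> (\<lambda>l. l + - p1) ` Lat"
    proof
      assume "x - p1 \<in> Lat" then have "x \<in> (\<lambda>l. l + p1) ` Lat" by (rule image_eqI[rotated]) simp
      then show ?thesis by blast
    next
      assume "x - - p1 \<in> Lat" then have "x \<in> (\<lambda>l. l + - p1) ` Lat" by (rule image_eqI[rotated]) simp
      then show ?thesis by blast
    qed
  qed
  show "countable ((\<lambda>l. l + p1) ` Lat \<union> (\<lambda>l. l + - p1) ` Lat)" using lat_countable by simp
qed

lemma ball_img_open: "open (ab ` ball y r)"
proof -
  have "ab -` (ab ` ball y r) = (\<Union>l\<in>Lat. ball (y + l) r)"
  proof (intro set_eqI iffI)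
    fix z assume "z \<in> ab -` (ab ` ball y r)"
    then obtain w where w: "w \<in> ball y r" "ab z = ab w" by auto
    then have l: "z - w \<in> Lat" by (simp add: ab_eq)
    have "dist (y + (z - w)) z = dist y w" by (simp add: dist_norm algebra_simps)
    then have "z \<in> ball (y + (z - w)) r" using w(1) by simp
    then show "z \<in> (\<Union>l\<in>Lat. ball (y + l) r)" using l by blast
  next
    fix z assume "z \<in> (\<Union>l\<in>Lat. ball (y + l) r)"
    then obtain l where l: "l \<in> Lat" "z \<in> ball (y + l) r" by auto
    have "dist y (z - l) = dist (y + l) z" by (simp add: dist_norm algebra_simps)
    then have "z - l \<in> ball y r" using l(2) by simp
    moreover have "ab z = ab (z - l)" using l(1) by (simp add: ab_eq)
    ultimately show "z \<in> ab -` (ab ` ball y r)" by auto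
  qed
  then show ?thesis by (simp add: open_hex_torus_def open_UN)
qed

lemma aff_global:
  assumes aff: "is_affine_aut \<Psi> A"
  shows "\<exists>b0. \<forall>x. \<Psi> (ab x) = ab (A *v x + b0)"
proof -
  obtain \<Psi>' where hom: "homeomorphism UNIV UNIV \<Psi> \<Psi>'" using aff unfolding is_affine_aut_def by blast
  have cont: "continuous_on UNIV \<Psi>" using homeomorphism_cont1[OF hom] .
  define P where "P = ab -` hex_Sigma"
  have cP: "countable P" unfolding P_def by (rule P_countable)
  have loc: "\<forall>p. p \<notin> P \<longrightarrow> (\<exists>U b. open U \<and> p \<in> U \<and> (\<forall>x\<in>U. \<Psi> (ab x) = ab (A *v x + b)))"
    using aff unfolding is_affine_aut_def P_def by blast
  then obtain Uf bf where UB: "\<And>p. p \<notin> P \<Longrightarrow> open (Uf p) \<and> p \<in> Uf p \<and> (\<forall>x\<in>Uf p. \<Psi> (ab x) = ab (A *v x + bf p))"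
    by metis
  obtain x0 where x0: "x0 \<notin> P" using ball_minus_countable_nonempty[OF cP, of 1 0] by auto
  have conn: "connected (- P)"
    by (rule path_connected_imp_connected, rule path_connected_complement_countable) (simp_all add: cP)
  define G where "G = {y. y \<notin> P \<and> bf y - bf x0 \<in> Lat}"
  define Ag where "Ag = \<Union> (Uf ` G)"
  define Bg where "Bg = \<Union> (Uf ` (- P - G))"
  have oA: "open Ag" unfolding Ag_def G_def using UB by (intro open_UN) auto
  have oB: "open Bg" unfolding Bg_def G_def using UB by (intro open_UN) auto
  have cov: "- P \<subseteq> Ag \<union> Bg"
  proof
    fix y assume y: "y \<in> - P"
    then have "y \<in> Uf y" using UB by auto
    then show "y \<in> Ag \<union> Bg" using y unfolding Ag_def Bg_def by (cases "y \<in> G") auto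
  qed
  have disj: "Ag \<inter> Bg = {}"
  proof (rule ccontr)
    assume "Ag \<inter> Bg \<noteq> {}"
    then obtain z y1 y2 where y1: "y1 \<in> G" "z \<in> Uf y1" and y2: "y2 \<notin> P" "y2 \<notin> G" "z \<in> Uf y2"
      unfolding Ag_def Bg_def by auto
    have p1: "y1 \<notin> P" "bf y1 - bf x0 \<in> Lat" using y1 unfolding G_def by auto
    have "ab (A *v z + bf y1) = ab (A *v z + bf y2)" using UB[OF p1(1)] UB[OF y2(1)] y1(2) y2(3) by metis
    then have "bf y1 - bf y2 \<in> Lat" by (simp add: ab_eq)
    then have "(bf y1 - bf x0) - (bf y1 - bf y2) \<in> Lat" using p1(2) lat_diff by blast
    then have "bf y2 - bf x0 \<in> Lat" by simp
    then show False using y2 unfolding G_def by auto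
  qed
  have x0A: "Ag \<inter> - P \<noteq> {}"
  proof -
    have "x0 \<in> G" using x0 lat_zero unfolding G_def by simp
    moreover have "x0 \<in> Uf x0" using UB x0 by auto
    ultimately show ?thesis using x0 unfolding Ag_def by blast
  qed
  have Bempty: "Bg \<inter> - P = {}"
    using conn oA oB cov disj x0A unfolding connected_def by blast
  define b0 where "b0 = bf x0"
  have offP: "\<Psi> (ab x) = ab (A *v x + b0)" if x: "x \<notin> P" for x
  proof -
    have "x \<in> Uf x" using UB x by auto
    have "x \<in> G"
    proof (rule ccontr)
      assume "x \<notin> G"
      then have "x \<in> Bg" using \<open>x \<in> Uf x\<close> x unfolding Bg_def by auto
      then show False using Bempty x by auto
    qed
    then have "bf x - b0 \<in> Lat" unfolding G_def b0_def by simp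
    then have "ab (A *v x + bf x) = ab (A *v x + b0)" by (simp add: ab_eq)
    then show ?thesis using UB[OF x] \<open>x \<in> Uf x\<close> by simp
  qed
  have "\<Psi> (ab x) = ab (A *v x + b0)" for x
  proof (rule ccontr)
    assume ne: "\<Psi> (ab x) \<noteq> ab (A *v x + b0)"
    define ys where "ys = rp (\<Psi> (ab x))"
    define yq where "yq = A *v x + b0"
    have ys: "ab ys = \<Psi> (ab x)" unfolding ys_def by (rule ab_rp)
    define d where "d = ys - yq"
    have dnl: "d \<notin> Lat"
    proof
      assume "d \<in> Lat"
      then have "ab ys = ab yq" unfolding d_def by (simp only: ab_eq)
      then show False using ne ys unfolding yq_def by simp
    qed
    define E where "E = (\<lambda>w. d - w) -` Lat"
    have "closed E" unfolding E_def by (rule closed_vimage[OF lat_closed]) (intro continuous_intros)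
    then have "open (- E)" by (simp add: open_Compl)
    moreover have "0 \<in> - E" using dnl unfolding E_def by simp
    ultimately obtain e where e: "e > 0" "ball 0 e \<subseteq> - E" using open_contains_ball by blast
    define Ns where "Ns = ab ` ball ys (e/2)"
    define Nq where "Nq = ab ` ball yq (e/2)"
    have dj: "False" if q1: "q \<in> Ns" and q2: "q \<in> Nq" for q
    proof -
      obtain w1 where w1: "w1 \<in> ball ys (e/2)" "q = ab w1" using q1 unfolding Ns_def by blast
      obtain w2 where w2: "w2 \<in> ball yq (e/2)" "q = ab w2" using q2 unfolding Nq_def by blast
      have "ab w1 = ab w2" using w1(2) w2(2) by simp
      then have l: "w1 - w2 \<in> Lat" by (simp only: ab_eq)
      define t where "t = (ys - w1) + (w2 - yq)"
      have "norm t \<le> norm (ys - w1) + norm (w2 - yq)" unfolding t_def by (rule norm_triangle_ineq)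
      also have "\<dots> < e" using w1(1) w2(1) by (simp add: dist_norm norm_minus_commute)
      finally have "t \<in> ball 0 e" by simp
      moreover have "d - t = w1 - w2" unfolding t_def d_def by (simp add: algebra_simps)
      then have "t \<in> E" using l unfolding E_def by simp
      ultimately show False using e(2) by auto
    qed
    define W1 where "W1 = ab -` (\<Psi> -` Ns)"
    define W2 where "W2 = (\<lambda>z. A *v z + b0) -` (ab -` Nq)"
    have "open (\<Psi> -` Ns)" unfolding Ns_def by (rule open_vimage[OF ball_img_open cont])
    then have oW1: "open W1" unfolding W1_def by (simp add: open_hex_torus_def)
    have "open (ab -` Nq)" using ball_img_open unfolding Nq_def open_hex_torus_def by blast
    moreover have "continuous_on UNIV (\<lambda>z. A *v z + b0)"
      by (intro continuous_on_add matrix_vector_mult_linear_continuous_on continuous_on_const)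
    ultimately have oW2: "open W2" unfolding W2_def by (rule open_vimage)
    have "x \<in> W1" unfolding W1_def Ns_def using ys e(1) by (auto intro!: image_eqI[of _ _ ys])
    moreover have "x \<in> W2" unfolding W2_def Nq_def yq_def using e(1) by auto
    ultimately obtain r where r: "r > 0" "ball x r \<subseteq> W1 \<inter> W2"
      using open_contains_ball oW1 oW2 open_Int by (metis IntI)
    have "ball x r - P \<noteq> {}" using ball_minus_countable_nonempty[OF cP r(1)] by blast
    then obtain z where z: "z \<in> ball x r" "z \<notin> P" by blast
    have "\<Psi> (ab z) \<in> Ns" using z r unfolding W1_def by auto
    moreover have "ab (A *v z + b0) \<in> Nq" using z r unfolding W2_def by auto
    ultimately show False using offP[OF z(2)] dj by auto
  qed
  then show ?thesis by blast
qed

lemma inv_prop: "invertible (A::real^2^2) \<Longrightarrow> A ** matrix_inv A = mat 1 \<and> matrix_inv A ** A = mat 1"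
  unfolding invertible_def matrix_inv_def by (rule someI_ex)

lemma int_coords: "v \<in> Lat \<Longrightarrow> \<exists>m n. c1 v = of_int m \<and> c2 v = of_int n"
  by (auto simp: lat_iff elim!: Ints_cases)

lemma lat_phi: "latpres A \<Longrightarrow> \<exists>a b c d. A = phi (of_int a) (of_int b) (of_int c) (of_int d)"
proof -
  assume l: "latpres A"
  have g: "g1 \<in> Lat" "g2 \<in> Lat" by (simp_all add: lat_iff c_g)
  obtain a c where ac: "c1 (A *v g1) = of_int a" "c2 (A *v g1) = of_int c"
    using int_coords l g(1) unfolding latpres_def by blast
  obtain b d where bd: "c1 (A *v g2) = of_int b" "c2 (A *v g2) = of_int d"
    using int_coords l g(2) unfolding latpres_def by blast
  show ?thesis using phi_all[of A] ac bd by metis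
qed

lemma aff_char:
  assumes aff: "is_affine_aut \<Psi> A"
  shows "goodR A \<and> \<Psi> = T A"
proof -
  obtain b0 where gl: "\<And>x. \<Psi> (ab x) = ab (A *v x + b0)" using aff_global[OF aff] by blast
  obtain \<Psi>' where hom: "homeomorphism UNIV UNIV \<Psi> \<Psi>'" using aff unfolding is_affine_aut_def by blast
  have lft: "\<Psi>' (\<Psi> x) = x" for x using homeomorphism_apply1[OF hom] by blast
  have injP: "\<Psi> p = \<Psi> q \<Longrightarrow> p = q" for p q by (metis lft)
  have sig: "\<Psi> ` hex_Sigma = hex_Sigma" and inv: "invertible A" using aff unfolding is_affine_aut_def by blast+
  have lp: "latpres A" unfolding latpres_def
  proof
    fix l assume l: "l \<in> Lat"
    have "ab l = ab 0" using l by (simp add: ab_eq)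
    then have "ab (A *v l + b0) = ab (A *v 0 + b0)" using gl[of l] gl[of 0] by simp
    then show "A *v l \<in> Lat" by (simp add: ab_eq)
  qed
  have lback: "w \<in> Lat" if w: "A *v w \<in> Lat" for w
  proof -
    have "ab (A *v w + b0) = ab (A *v 0 + b0)" using w by (simp add: ab_eq)
    then have "\<Psi> (ab w) = \<Psi> (ab 0)" using gl[of w] gl[of 0] by simp
    then have "ab w = ab 0" by (rule injP)
    then show ?thesis by (simp add: ab_eq)
  qed
  have im: "\<Psi> ` hex_Sigma = {ab (A *v p1 + b0), ab (- (A *v p1) + b0)}"
    unfolding Sigma_eq by (simp add: gl mv_uminus)
  have "{ab (A *v p1 + b0), ab (- (A *v p1) + b0)} = hex_Sigma"
    using sig im by simp
  then have "{ab (A *v p1 + b0), ab (- (A *v p1) + b0)} = {ab p1, ab (- p1)}"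
    by (simp only: Sigma_eq)
  then have cases: "(ab (A *v p1 + b0) = ab p1 \<and> ab (- (A *v p1) + b0) = ab (- p1)) \<or>
     (ab (A *v p1 + b0) = ab (- p1) \<and> ab (- (A *v p1) + b0) = ab p1)"
    by (simp only: doubleton_eq_iff)
  have A3: "A *v (3 *\<^sub>R p1) \<in> Lat" using lp p1_3 unfolding latpres_def by blast
  have b0p: "b0 \<in> Lat \<and> (A *v p1 - p1 \<in> Lat \<or> A *v p1 + p1 \<in> Lat)"
    using cases
  proof
    assume h: "ab (A *v p1 + b0) = ab p1 \<and> ab (- (A *v p1) + b0) = ab (- p1)"
    have X: "A *v p1 + b0 - p1 \<in> Lat" using h by (simp only: ab_eq)
    have Y: "- (A *v p1) + b0 - - p1 \<in> Lat" using h by (simp only: ab_eq)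
    have eq: "b0 = 3 *\<^sub>R (A *v p1 + b0 - p1) + 3 *\<^sub>R p1 - A *v (3 *\<^sub>R p1) - ((A *v p1 + b0 - p1) + (- (A *v p1) + b0 - - p1))"
      by (simp add: vec_eq_iff forall_2 matrix_vector_mult_def sum_2 algebra_simps)
    have b: "b0 \<in> Lat" by (subst eq) (intro lat_diff lat_add lat_scale3 X Y p1_3 A3)
    have "A *v p1 - p1 = (A *v p1 + b0 - p1) - b0" by simp
    then have "A *v p1 - p1 \<in> Lat" using lat_diff[OF X b] by simp
    with b show ?thesis by blast
  next
    assume h: "ab (A *v p1 + b0) = ab (- p1) \<and> ab (- (A *v p1) + b0) = ab p1"
    have X: "A *v p1 + b0 - - p1 \<in> Lat" using h by (simp only: ab_eq)
    have Y: "- (A *v p1) + b0 - p1 \<in> Lat" using h by (simp only: ab_eq)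
    have eq: "b0 = 3 *\<^sub>R (A *v p1 + b0 - - p1) - 3 *\<^sub>R p1 - A *v (3 *\<^sub>R p1) - ((A *v p1 + b0 - - p1) + (- (A *v p1) + b0 - p1))"
      by (simp add: vec_eq_iff forall_2 matrix_vector_mult_def sum_2 algebra_simps)
    have b: "b0 \<in> Lat" by (subst eq) (intro lat_diff lat_add lat_scale3 X Y p1_3 A3)
    have "A *v p1 + p1 = (A *v p1 + b0 - - p1) - b0" by simp
    then have "A *v p1 + p1 \<in> Lat" using lat_diff[OF X b] by simp
    with b show ?thesis by blast
  qed
  have PsiT: "\<Psi> = T A"
  proof
    fix p
    have "\<Psi> p = \<Psi> (ab (rp p))" by (simp add: ab_rp)
    also have "\<dots> = ab (A *v rp p + b0)" by (rule gl)
    also have "\<dots> = ab (A *v rp p)" using b0p by (simp add: ab_eq)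
    finally show "\<Psi> p = T A p" by (simp add: T_def)
  qed
  obtain a b c d where A: "A = phi (of_int a) (of_int b) (of_int c) (of_int d)" using lat_phi[OF lp] by blast
  have ip: "A ** matrix_inv A = mat 1" "matrix_inv A ** A = mat 1" using inv_prop[OF inv] by auto
  have lpi: "latpres (matrix_inv A)" unfolding latpres_def
  proof
    fix l assume l: "l \<in> Lat"
    have "A *v (matrix_inv A *v l) = l" by (simp add: matrix_vector_mul_assoc ip)
    then show "matrix_inv A *v l \<in> Lat" using lback l by simp
  qed
  obtain a' b' c' d' where Ai: "matrix_inv A = phi (of_int a') (of_int b') (of_int c') (of_int d')" using lat_phi[OF lpi] by blast
  have "phi (of_int (a*a'+b*c')) (of_int (a*b'+b*d')) (of_int (c*a'+d*c')) (of_int (c*b'+d*d')) = phi (of_int 1) (of_int 0) (of_int 0) (of_int 1)"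
  proof -
    have "A ** phi (of_int a') (of_int b') (of_int c') (of_int d') = mat 1" using ip(1) by (simp only: Ai)
    then have "phi (of_int a) (of_int b) (of_int c) (of_int d) ** phi (of_int a') (of_int b') (of_int c') (of_int d') = mat 1"
      by (simp only: A)
    then show ?thesis by (simp add: phi_mult phi_one)
  qed
  then have pe: "a*a'+b*c' = 1" "a*b'+b*d' = 0" "c*a'+d*c' = 0" "c*b'+d*d' = 1"
    unfolding phi_eq_iff of_int_eq_iff by auto
  have "(a*d-b*c)*(a'*d'-b'*c') = (a*a'+b*c')*(c*b'+d*d') - (a*b'+b*d')*(c*a'+d*c')"
    by (simp add: algebra_simps)
  then have "(a*d-b*c)*(a'*d'-b'*c') = 1" using pe by simp
  then have det: "a*d-b*c = 1 \<or> a*d-b*c = -1" using zmult_eq_1_iff by blast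
  have "3 dvd b"
  proof -
    have cp: "c1 (A *v p1) = of_int a - of_int b / 3" by (simp add: A phi_c1 cp1)
    from b0p have "c1 (A *v p1) \<in> \<int>"
    proof (elim conjE disjE)
      assume "A *v p1 - p1 \<in> Lat"
      then have "c1 (A *v p1) - 1 \<in> \<int>" by (simp add: lat_iff c1_minus cp1)
      then have "c1 (A *v p1) - 1 + 1 \<in> \<int>" by (intro Ints_add) simp_all
      then show ?thesis by simp
    next
      assume "A *v p1 + p1 \<in> Lat"
      then have "c1 (A *v p1) + 1 \<in> \<int>" by (simp add: lat_iff c1_add cp1)
      then have "c1 (A *v p1) + 1 - 1 \<in> \<int>" by (intro Ints_diff) simp_all
      then show ?thesis by simp
    qed
    then have "of_int a - c1 (A *v p1) \<in> \<int>" by (intro Ints_diff) simp_all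
    then have "(of_int b / 3 :: real) \<in> \<int>" using cp by simp
    then show ?thesis by (simp add: int_third)
  qed
  then have "goodR A" using det A unfolding goodR_def goodI_def by blast
  with PsiT show ?thesis by blast
qed

lemma good_alpha: "goodR mat_alpha"
  unfolding goodR_def goodI_def alpha_phi
  by (rule exI[of _ 2], rule exI[of _ 3], rule exI[of _ "-1"], rule exI[of _ "-2"]) simp
lemma good_beta: "goodR mat_beta"
  unfolding goodR_def goodI_def beta_phi
  by (rule exI[of _ 1], rule exI[of _ 3], rule exI[of _ 0], rule exI[of _ "-1"]) simp
lemma good_gamma: "goodR mat_gamma"
  unfolding goodR_def goodI_def gamma_phi
  by (rule exI[of _ 1], rule exI[of _ 6], rule exI[of _ 0], rule exI[of _ "-1"]) simp

lemma Gen_good: "A \<in> Gen \<Longrightarrow> goodR A"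
proof (induction rule: generated.induct)
  case gen_one then show ?case by (rule goodR_one)
next
  case (gen_base g) then show ?case using good_alpha good_beta good_gamma by auto
next
  case (gen_mult f g) then show ?case using goodR_mult by blast
next
  case (gen_inv f) then show ?case using goodR_inv by blast
qed

lemma good_Gen: "goodR A \<Longrightarrow> A \<in> Gen"
  unfolding goodR_def goodI_def using red hp_def by blast

abbreviation GenF where "GenF \<equiv> generated (\<circ>) id inv {T mat_alpha, T mat_beta, T mat_gamma}"

lemma T_inv: "goodR A \<Longrightarrow> inv (T A) = T (matrix_inv A)"
proof -
  assume g: "goodR A"
  obtain gi: "goodR (matrix_inv A)" and m1: "A ** matrix_inv A = mat 1" and m2: "matrix_inv A ** A = mat 1"
    using goodR_inv[OF g] by blast
  have l: "latpres A" "latpres (matrix_inv A)" using g gi goodR_latpres by blast+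
  show ?thesis
    by (rule inv_unique_comp) (simp_all add: T_comp[OF l(1) l(2)] T_comp[OF l(2) l(1)] m1 m2 T_one)
qed

lemma Gen_T: "A \<in> Gen \<Longrightarrow> T A \<in> GenF"
proof (induction rule: generated.induct)
  case gen_one then show ?case by (subst T_one) (rule generated.gen_one)
next
  case (gen_base g) then show ?case by (auto intro: generated.gen_base)
next
  case (gen_mult f g)
  have "T (f ** g) = T f \<circ> T g"
    using T_comp Gen_good[OF gen_mult.hyps(1)] Gen_good[OF gen_mult.hyps(2)] goodR_latpres by metis
  moreover have "T f \<circ> T g \<in> GenF" using gen_mult.IH by (rule generated.gen_mult)
  ultimately show ?case by (simp only:)
next
  case (gen_inv f)
  have "T (matrix_inv f) = inv (T f)" using T_inv[OF Gen_good[OF gen_inv.hyps]] by simp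
  moreover have "inv (T f) \<in> GenF" using gen_inv.IH by (rule generated.gen_inv)
  ultimately show ?case by (simp only:)
qed

lemma GenF_T: "\<Psi> \<in> GenF \<Longrightarrow> \<exists>A. goodR A \<and> \<Psi> = T A"
proof (induction rule: generated.induct)
  case gen_one then show ?case using T_one goodR_one by metis
next
  case (gen_base g) then show ?case using good_alpha good_beta good_gamma by auto
next
  case (gen_mult f g)
  then obtain A B where AB: "goodR A" "f = T A" "goodR B" "g = T B" by blast
  then have "f \<circ> g = T (A ** B)" using T_comp goodR_latpres by metis
  then show ?case using goodR_mult[OF AB(1) AB(3)] by blast
next
  case (gen_inv f)
  then obtain A where A: "goodR A" "f = T A" by blast
  then have "inv f = T (matrix_inv A)" using T_inv by simp
  then show ?case using goodR_inv[OF A(1)] by blast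
qed

theorem mainTheorem2:
  shows "(\<forall>\<Psi>1 \<Psi>2 A. is_affine_aut \<Psi>1 A \<and> is_affine_aut \<Psi>2 A \<longrightarrow> \<Psi>1 = \<Psi>2)
    \<and> (\<exists>\<Psi>\<alpha> \<Psi>\<beta> \<Psi>\<gamma>. is_affine_aut \<Psi>\<alpha> mat_alpha \<and> is_affine_aut \<Psi>\<beta> mat_beta \<and>
         is_affine_aut \<Psi>\<gamma> mat_gamma \<and>
         Aff_SE = generated (\<circ>) id inv {\<Psi>\<alpha>, \<Psi>\<beta>, \<Psi>\<gamma>})
    \<and> Veech_SE = generated (**) (mat 1) matrix_inv {mat_alpha, mat_beta, mat_gamma}"
proof (intro conjI)
  show "\<forall>\<Psi>1 \<Psi>2 A. is_affine_aut \<Psi>1 A \<and> is_affine_aut \<Psi>2 A \<longrightarrow> \<Psi>1 = \<Psi>2"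
    using aff_char by metis
  have "Aff_SE = GenF"
  proof
    show "Aff_SE \<subseteq> GenF"
    proof
      fix \<Psi> assume "\<Psi> \<in> Aff_SE"
      then obtain A where "is_affine_aut \<Psi> A" unfolding Aff_SE_def by blast
      then have "goodR A" "\<Psi> = T A" using aff_char by blast+
      then show "\<Psi> \<in> GenF" using Gen_T good_Gen by blast
    qed
    show "GenF \<subseteq> Aff_SE"
    proof
      fix \<Psi> assume "\<Psi> \<in> GenF"
      then obtain A where "goodR A" "\<Psi> = T A" using GenF_T by blast
      then show "\<Psi> \<in> Aff_SE" unfolding Aff_SE_def using good_aff by blast
    qed
  qed
  then show "\<exists>\<Psi>\<alpha> \<Psi>\<beta> \<Psi>\<gamma>. is_affine_aut \<Psi>\<alpha> mat_alpha \<and> is_affine_aut \<Psi>\<beta> mat_beta \<and>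
         is_affine_aut \<Psi>\<gamma> mat_gamma \<and>
         Aff_SE = generated (\<circ>) id inv {\<Psi>\<alpha>, \<Psi>\<beta>, \<Psi>\<gamma>}"
    using good_aff good_alpha good_beta good_gamma by blast
  show "Veech_SE = Gen"
  proof
    show "Veech_SE \<subseteq> Gen"
    proof
      fix A assume "A \<in> Veech_SE"
      then obtain \<Psi> where "is_affine_aut \<Psi> A" unfolding Veech_SE_def by blast
      then show "A \<in> Gen" using aff_char good_Gen by blast
    qed
    show "Gen \<subseteq> Veech_SE"
    proof
      fix A assume "A \<in> Gen"
      then show "A \<in> Veech_SE" unfolding Veech_SE_def using Gen_good good_aff by blast
    qed
  qed
qed

end
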